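(* Let $D$ be a dendrite and let $A_1,A_2,B_1,B_2$ be nondegenerate subdendrites of $D$ such that $A_i\cap B_i=\emptyset$ for $i\in\{1,2\}$ and the intersections $A_1\cap A_2$, $B_1\cap B_2$ and $A_1\cap B_2$ are nonempty. For $i\in\{1,2\}$ let $C_i$ be the (unique) component of $D\setminus B_i$ containing $A_i$. Then for each $i\in\{1,2\}$ we have $\operatorname{Bd}(C_i)=\operatorname{Bd}(\overline{C_i})=\{c_i\}$ for some point $c_i\in B_i$ which is a cutpoint of $D$. Moreover, $c_2\in A_1\cap B_2$, $c_1\notin\overline{C_2}$, and $C_2\subsetneq C_1$.
   Context: A dendrite is a locally connected continuum containing no simple closed curve; a subdendrite is a subcontinuum. $\operatorname{Bd}$ denotes the topological boundary in $D$. A cutpoint of $D$ is a point $x$ with $D\setminus\{x\}$ disconnected. *)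

theory Defs
  imports "HOL-Analysis.Analysis"
begin

definition continuum :: "'a::metric_space set \<Rightarrow> bool" where
  "continuum X \<longleftrightarrow> X \<noteq> {} \<and> compact X \<and> connected X"

definition simple_closed_curve :: "'a::metric_space set \<Rightarrow> bool" where
  "simple_closed_curve S \<longleftrightarrow> S homeomorphic sphere (0::complex) 1"

definition dendrite :: "'a::metric_space set \<Rightarrow> bool" where
  "dendrite D \<longleftrightarrow> continuum D \<and> locally connected D \<and>
     \<not> (\<exists>S. S \<subseteq> D \<and> simple_closed_curve S)"

definition subdendrite :: "'a::metric_space set \<Rightarrow> 'a set \<Rightarrow> bool" where
  "subdendrite D A \<longleftrightarrow> A \<subseteq> D \<and> continuum A"

definition nondegenerate :: "'a set \<Rightarrow> bool" where
  "nondegenerate A \<longleftrightarrow> (\<exists>x y. x \<in> A \<and> y \<in> A \<and> x \<noteq> y)"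

definition Bd :: "'a::metric_space set \<Rightarrow> 'a set \<Rightarrow> 'a set" where
  "Bd D C = (subtopology euclidean D) frontier_of C"

definition clD :: "'a::metric_space set \<Rightarrow> 'a set \<Rightarrow> 'a set" where
  "clD D C = (subtopology euclidean D) closure_of C"

definition cutpoint :: "'a::metric_space set \<Rightarrow> 'a \<Rightarrow> bool" where
  "cutpoint D x \<longleftrightarrow> x \<in> D \<and> \<not> connected (D - {x})"

end

theory Submission
  imports Defs
begin


lemma ulc:
  fixes D :: "'b::metric_space set"
  assumes "compact D" "locally connected D" "e > 0"
  shows "\<exists>d>0. \<forall>a\<in>D. \<forall>b\<in>D. dist a b < d \<longrightarrow>
           (\<exists>E. connected E \<and> E \<subseteq> D \<and> E \<subseteq> ball a e \<and> a \<in> E \<and> b \<in> E)"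
proof -
  define G where "G = {W. open W \<and> (\<exists>y v. connected v \<and> D \<inter> W \<subseteq> v \<and> v \<subseteq> D \<inter> ball y (e/2))}"
  have cov: "D \<subseteq> \<Union>G"
  proof
    fix y assume y: "y \<in> D"
    have "openin (top_of_set D) (D \<inter> ball y (e/2))" by (simp add: openin_open_Int)
    moreover have "y \<in> D \<inter> ball y (e/2)" using y assms(3) by simp
    ultimately obtain u v where uv: "openin (top_of_set D) u" "connected v" "y \<in> u" "u \<subseteq> v" "v \<subseteq> D \<inter> ball y (e/2)"
      using assms(2) unfolding locally_def by metis
    then obtain W where W: "open W" "u = D \<inter> W" by (meson openin_open)
    then have "W \<in> G" using uv unfolding G_def by blast
    then show "y \<in> \<Union>G" using W uv by blast
  qed
  have opn: "\<And>W. W \<in> G \<Longrightarrow> open W" by (simp add: G_def)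
  obtain d where d: "d > 0" "\<And>x. x \<in> D \<Longrightarrow> \<exists>W\<in>G. ball x d \<subseteq> W"
    using Heine_Borel_lemma[OF assms(1) cov opn] by metis
  have "\<forall>a\<in>D. \<forall>b\<in>D. dist a b < d \<longrightarrow>
           (\<exists>E. connected E \<and> E \<subseteq> D \<and> E \<subseteq> ball a e \<and> a \<in> E \<and> b \<in> E)"
  proof (intro ballI impI)
    fix a b assume ab: "a \<in> D" "b \<in> D" "dist a b < d"
    obtain W where W: "W \<in> G" "ball a d \<subseteq> W" using d(2)[OF ab(1)] by blast
    then obtain y v where yv: "connected v" "D \<inter> W \<subseteq> v" "v \<subseteq> D \<inter> ball y (e/2)" unfolding G_def by blast
    have "a \<in> ball a d" "b \<in> ball a d" using d(1) ab(3) by auto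
    then have "a \<in> v" "b \<in> v" using ab W yv by blast+
    moreover have "v \<subseteq> ball a e"
    proof
      fix z assume "z \<in> v"
      then have "dist y z < e/2" "dist y a < e/2" using yv \<open>a \<in> v\<close> by auto
      then show "z \<in> ball a e" by (simp add: dist_commute) (smt (verit) dist_triangle)
    qed
    ultimately show "\<exists>E. connected E \<and> E \<subseteq> D \<and> E \<subseteq> ball a e \<and> a \<in> E \<and> b \<in> E"
      using yv by blast
  qed
  with d(1) show ?thesis by blast
qed



inductive polyD :: "('b::real_normed_vector \<Rightarrow> 'b \<Rightarrow> bool) \<Rightarrow> 'b \<Rightarrow> 'b \<Rightarrow> (real \<Rightarrow> 'b) \<Rightarrow> bool"
  for R where
  base: "R a b \<Longrightarrow> polyD R a b (linepath a b)"
| join: "polyD R a c g \<Longrightarrow> polyD R c b h \<Longrightarrow> polyD R a b (g +++ h)"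

lemma polyD_path: "polyD R a b g \<Longrightarrow> path g \<and> pathstart g = a \<and> pathfinish g = b"
  by (induction rule: polyD.induct) auto

lemma dist_linepath_start:
  fixes a b :: "'b::real_normed_vector"
  assumes "t \<in> {0..1}"
  shows "dist a (linepath a b t) \<le> dist a b"
proof -
  have "linepath a b t - a = t *\<^sub>R (b - a)"
    by (simp add: linepath_def algebra_simps)
  then have "dist a (linepath a b t) = norm (t *\<^sub>R (b - a))"
    by (metis dist_commute dist_norm)
  also have "\<dots> = t * norm (b - a)" using assms by simp
  also have "\<dots> \<le> norm (b - a)"
    using assms by (simp add: mult_left_le_one_le)
  finally show ?thesis by (simp add: dist_norm norm_minus_commute)
qed

lemma polyD_near:
  assumes "polyD R a b g" "\<And>x y. R x y \<Longrightarrow> x \<in> D \<and> dist x y < d"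
  shows "t \<in> {0..1} \<Longrightarrow> \<exists>u\<in>D. dist (g t) u < d"
  using assms(1)
proof (induction arbitrary: t rule: polyD.induct)
  case (base a b)
  then show ?case
    using assms(2)[OF base(1)] dist_linepath_start[OF base(2), of a b]
    by (metis dist_commute order_le_less_trans)
next
  case (join a c g b h)
  show ?case
  proof (cases "t \<le> 1/2")
    case True
    then have "2*t \<in> {0..1}" using join.prems by auto
    then show ?thesis using join.IH(1) True by (simp add: joinpaths_def)
  next
    case False
    then have "2*t - 1 \<in> {0..1}" using join.prems by auto
    then show ?thesis using join.IH(2) False by (simp add: joinpaths_def)
  qed
qed

lemma polyD_chain:
  fixes D :: "'b::real_normed_vector set"
  assumes "connected E" "E \<subseteq> D" "E \<subseteq> K" "convex K" "x \<in> E" "y \<in> E" "d > 0"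
  shows "\<exists>h. polyD (\<lambda>u v. u \<in> D \<and> v \<in> D \<and> dist u v < d) x y h \<and> path_image h \<subseteq> K"
proof (rule connected_induction_simple[OF assms(1) assms(5) assms(6),
      where P = "\<lambda>z. \<exists>h. polyD (\<lambda>u v. u \<in> D \<and> v \<in> D \<and> dist u v < d) x z h \<and> path_image h \<subseteq> K"])
  show "\<exists>h. polyD (\<lambda>u v. u \<in> D \<and> v \<in> D \<and> dist u v < d) x x h \<and> path_image h \<subseteq> K"
    using assms by (intro exI[of _ "linepath x x"]) (auto intro: polyD.base)
next
  fix z assume "z \<in> E"
  show "\<exists>T. openin (top_of_set E) T \<and> z \<in> T \<and>
           (\<forall>u\<in>T. \<forall>w\<in>T. (\<exists>h. polyD (\<lambda>u v. u \<in> D \<and> v \<in> D \<and> dist u v < d) x u h \<and> path_image h \<subseteq> K) \<longrightarrow>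
                 (\<exists>h. polyD (\<lambda>u v. u \<in> D \<and> v \<in> D \<and> dist u v < d) x w h \<and> path_image h \<subseteq> K))"
  proof (intro exI[of _ "E \<inter> ball z (d/2)"] conjI ballI impI)
    show "openin (top_of_set E) (E \<inter> ball z (d/2))" by (simp add: openin_open_Int)
    show "z \<in> E \<inter> ball z (d/2)" using \<open>z \<in> E\<close> assms(7) by simp
    fix u w assume u: "u \<in> E \<inter> ball z (d/2)" and w: "w \<in> E \<inter> ball z (d/2)"
      and "\<exists>h. polyD (\<lambda>u v. u \<in> D \<and> v \<in> D \<and> dist u v < d) x u h \<and> path_image h \<subseteq> K"
    then obtain h where h: "polyD (\<lambda>u v. u \<in> D \<and> v \<in> D \<and> dist u v < d) x u h" "path_image h \<subseteq> K"
      by blast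
    have "dist z u < d/2" "dist z w < d/2" using u w by auto
    then have duw: "dist u w < d"
      using dist_triangle[of u w z] dist_commute[of z u] by linarith
    have R: "polyD (\<lambda>u v. u \<in> D \<and> v \<in> D \<and> dist u v < d) u w (linepath u w)"
      using u w duw assms(2) by (intro polyD.base) auto
    have "closed_segment u w \<subseteq> K"
      using u w assms(3,4) by (intro closed_segment_subset) auto
    moreover have "pathfinish h = u" using polyD_path[OF h(1)] by simp
    ultimately have "path_image (h +++ linepath u w) \<subseteq> K"
      using h(2) by (simp add: path_image_join)
    then show "\<exists>h. polyD (\<lambda>u v. u \<in> D \<and> v \<in> D \<and> dist u v < d) x w h \<and> path_image h \<subseteq> K"
      using polyD.join[OF h(1) R] by blast
  qed
qed

lemma polyD_refine:
  fixes D :: "'b::real_normed_vector set"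
  assumes ulc: "\<forall>a\<in>D. \<forall>b\<in>D. dist a b < d1 \<longrightarrow>
           (\<exists>E. connected E \<and> E \<subseteq> D \<and> E \<subseteq> ball a e1 \<and> a \<in> E \<and> b \<in> E)"
    and "d1 \<le> e1" "d2 > 0"
    and R1: "\<And>u v. Rr u v \<Longrightarrow> u \<in> D \<and> v \<in> D \<and> dist u v < d1"
  shows "polyD Rr a b g \<Longrightarrow> \<exists>h. polyD (\<lambda>u v. u \<in> D \<and> v \<in> D \<and> dist u v < d2) a b h \<and>
            (\<forall>t\<in>{0..1}. dist (g t) (h t) < 2*e1)"
proof (induction rule: polyD.induct)
  case (base a b)
  have ab: "a \<in> D" "b \<in> D" "dist a b < d1" using R1[OF base] by auto
  then obtain E where E: "connected E" "E \<subseteq> D" "E \<subseteq> ball a e1" "a \<in> E" "b \<in> E"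
    using ulc by blast
  obtain h where h: "polyD (\<lambda>u v. u \<in> D \<and> v \<in> D \<and> dist u v < d2) a b h" "path_image h \<subseteq> ball a e1"
    using polyD_chain[OF E(1,2,3) convex_ball E(4,5) assms(3)] by blast
  have "dist (linepath a b t) (h t) < 2*e1" if t: "t \<in> {0..1}" for t
  proof -
    have "dist a (linepath a b t) < e1"
      using dist_linepath_start[OF t, of a b] ab(3) assms(2) by linarith
    moreover have "h t \<in> path_image h" using t by (simp add: path_image_def)
    then have "dist a (h t) < e1" using h(2) by auto
    ultimately show ?thesis
      using dist_triangle[of "linepath a b t" "h t" a] dist_commute[of a "linepath a b t"] by linarith
  qed
  then show ?case using h(1) by blast
next
  case (join a c g b k)
  obtain h1 where h1: "polyD (\<lambda>u v. u \<in> D \<and> v \<in> D \<and> dist u v < d2) a c h1"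
     "\<forall>t\<in>{0..1}. dist (g t) (h1 t) < 2*e1" using join.IH(1) by blast
  obtain h2 where h2: "polyD (\<lambda>u v. u \<in> D \<and> v \<in> D \<and> dist u v < d2) c b h2"
     "\<forall>t\<in>{0..1}. dist (k t) (h2 t) < 2*e1" using join.IH(2) by blast
  have "dist ((g +++ k) t) ((h1 +++ h2) t) < 2*e1" if t: "t \<in> {0..1}" for t
  proof (cases "t \<le> 1/2")
    case True
    then have "2*t \<in> {0..1}" using t by auto
    then show ?thesis using h1(2) True by (simp add: joinpaths_def)
  next
    case False
    then have "2*t - 1 \<in> {0..1}" using t by auto
    then show ?thesis using h2(2) False by (simp add: joinpaths_def)
  qed
  then show ?case using polyD.join[OF h1(1) h2(1)] by blast
qed



lemma peano_paths:
  fixes D :: "'b::{real_normed_vector,complete_space} set"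
  assumes "compact D" "locally connected D" "e > 0"
  shows "\<exists>d>0. \<forall>a\<in>D. \<forall>b\<in>D. dist a b < d \<longrightarrow>
           (\<exists>g. path g \<and> path_image g \<subseteq> D \<and> path_image g \<subseteq> ball a e \<and> pathstart g = a \<and> pathfinish g = b)"
proof -
  define c where "c = e/8"
  have c: "c > 0" using assms(3) by (simp add: c_def)
  define eps where "eps n = c * (1/2)^n" for n :: nat
  have eps_pos: "eps n > 0" for n using c by (simp add: eps_def)
  have "\<forall>n. \<exists>d>0. \<forall>a\<in>D. \<forall>b\<in>D. dist a b < d \<longrightarrow>
           (\<exists>E. connected E \<and> E \<subseteq> D \<and> E \<subseteq> ball a (eps n) \<and> a \<in> E \<and> b \<in> E)"
    using ulc[OF assms(1,2) eps_pos] by blast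
  then obtain dl where dl: "\<And>n. dl n > 0" "\<And>n. \<forall>a\<in>D. \<forall>b\<in>D. dist a b < dl n \<longrightarrow>
           (\<exists>E. connected E \<and> E \<subseteq> D \<and> E \<subseteq> ball a (eps n) \<and> a \<in> E \<and> b \<in> E)"
    by metis
  define dm where "dm n = min (dl n) (eps n)" for n
  have dm_pos: "dm n > 0" for n using dl(1) eps_pos by (simp add: dm_def)
  have dm_le: "dm n \<le> eps n" for n by (simp add: dm_def)
  have dm_ulc: "\<forall>a\<in>D. \<forall>b\<in>D. dist a b < dm n \<longrightarrow>
           (\<exists>E. connected E \<and> E \<subseteq> D \<and> E \<subseteq> ball a (eps n) \<and> a \<in> E \<and> b \<in> E)" for n
    using dl(2)[of n] by (auto simp: dm_def)
  define R where "R n = (\<lambda>u v. u \<in> D \<and> v \<in> D \<and> dist u v < dm n)" for n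
  have Rn: "R n u v \<Longrightarrow> u \<in> D \<and> v \<in> D \<and> dist u v < dm n" for n u v by (simp add: R_def)
  have refine: "\<exists>h. polyD (R (Suc n)) a b h \<and>
            (\<forall>t\<in>{0..1}. dist (g t) (h t) < 2 * eps n)" if "polyD (R n) a b g" for n a b g
  proof -
    have "\<exists>h. polyD (\<lambda>u v. u \<in> D \<and> v \<in> D \<and> dist u v < dm (Suc n)) a b h \<and>
            (\<forall>t\<in>{0..1}. dist (g t) (h t) < 2 * eps n)"
      using polyD_refine[where Rr="R n", OF dm_ulc[of n] dm_le[of n] dm_pos[of "Suc n"] Rn[of n] that] .
    then show ?thesis by (simp add: R_def)
  qed
  have eps_Suc: "eps (Suc n) = eps n / 2" for n by (simp add: eps_def)
  have "\<forall>a\<in>D. \<forall>b\<in>D. dist a b < dm 0 \<longrightarrow>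
           (\<exists>g. path g \<and> path_image g \<subseteq> D \<and> path_image g \<subseteq> ball a e \<and> pathstart g = a \<and> pathfinish g = b)"
  proof (intro ballI impI)
    fix a b assume ab: "a \<in> D" "b \<in> D" "dist a b < dm 0"
    have P0: "polyD (R 0) a b (linepath a b)" using ab by (intro polyD.base) (simp add: R_def)
    obtain G where G: "\<And>n. polyD (R n) a b (G n)"
      "\<And>n. \<forall>t\<in>{0..1}. dist (G n t) (G (Suc n) t) < 2 * eps n" and G0: "G 0 = linepath a b"
    proof -
      have "\<exists>f. \<forall>n. (polyD (R n) a b (f n) \<and> (n = 0 \<longrightarrow> f n = linepath a b)) \<and>
               (\<forall>t\<in>{0..1}. dist (f n t) (f (Suc n) t) < 2 * eps n)"
        by (rule dependent_nat_choice) (use P0 refine in auto)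
      then show ?thesis using that by blast
    qed
    have Gpath: "path (G n) \<and> pathstart (G n) = a \<and> pathfinish (G n) = b" for n
      using polyD_path[OF G(1)] .
    have cauchy: "dist (G m t) (G (m+j) t) \<le> 4 * eps m - 4 * eps (m+j)" if t: "t \<in> {0..1}" for m j t
    proof (induction j)
      case 0 then show ?case by simp
    next
      case (Suc j)
      have "dist (G m t) (G (m + Suc j) t) \<le> dist (G m t) (G (m+j) t) + dist (G (m+j) t) (G (Suc (m+j)) t)"
        by (simp add: dist_triangle)
      also have "\<dots> \<le> 4 * eps m - 4 * eps (m+j) + 2 * eps (m+j)"
        using Suc G(2)[of "m+j"] t by (smt (verit))
      also have "\<dots> = 4 * eps m - 4 * eps (m + Suc j)"
        using eps_Suc[of "m+j"] by simp
      finally show ?case .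
    qed
    have cauchy2: "dist (G m t) (G n t) \<le> 4 * eps m" if "t \<in> {0..1}" "m \<le> n" for m n t
      using cauchy[OF that(1), of m "n - m"] that(2) eps_pos[of n] by simp
    have small: "\<exists>n. 8 * eps n < r" if rpos: "r > 0" for r
    proof -
      obtain n where "(1/2::real)^n < r / (8*c)"
        using real_arch_pow_inv[of "r/(8*c)" "1/2"] rpos c by auto
      then have "8 * eps n < r" using c by (simp add: eps_def field_simps)
      then show ?thesis ..
    qed
    define g where "g t = lim (\<lambda>n. G n t)" for t
    have conv: "(\<lambda>n. G n t) \<longlonglongrightarrow> g t" if t: "t \<in> {0..1}" for t
    proof -
      have "Cauchy (\<lambda>n. G n t)"
      proof (rule metric_CauchyI)
        fix r :: real assume "r > 0"
        then obtain M where M: "8 * eps M < r" using small by blast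
        have "dist (G m t) (G n t) < r" if "M \<le> m" "M \<le> n" for m n
        proof -
          have "dist (G m t) (G n t) \<le> dist (G M t) (G m t) + dist (G M t) (G n t)"
            by (simp add: dist_triangle3)
          also have "\<dots> \<le> 8 * eps M" using cauchy2[OF t that(1)] cauchy2[OF t that(2)] by simp
          finally show ?thesis using M by simp
        qed
        then show "\<exists>M. \<forall>m\<ge>M. \<forall>n\<ge>M. dist (G m t) (G n t) < r" by blast
      qed
      then show ?thesis unfolding g_def by (rule convergent_LIMSEQ_iff[THEN iffD1, OF Cauchy_convergent])
    qed
    have bound: "dist (G m t) (g t) \<le> 4 * eps m" if t: "t \<in> {0..1}" for m t
    proof (rule Lim_dist_ubound[OF trivial_limit_sequentially conv[OF t]])
      show "\<forall>\<^sub>F n in sequentially. dist (G m t) (G n t) \<le> 4 * eps m"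
        using cauchy2[OF t] by (auto simp: eventually_sequentially)
    qed
    have "continuous_on {0..1} g"
    proof (rule uniform_limit_theorem[where F=sequentially and f=G])
      show "\<forall>\<^sub>F n in sequentially. continuous_on {0..1} (G n)"
        using Gpath by (simp add: path_def)
      show "uniform_limit {0..1} G g sequentially"
        unfolding uniform_limit_iff
      proof (intro allI impI)
        fix r :: real assume "r > 0"
        then obtain M where M: "8 * eps M < r" using small by blast
        have "\<forall>x\<in>{0..1}. dist (G n x) (g x) < r" if "M \<le> n" for n
        proof
          fix x :: real assume x: "x \<in> {0..1}"
          have "eps n \<le> eps M" using that by (simp add: eps_def c power_decreasing)
          then show "dist (G n x) (g x) < r" using bound[OF x, of n] M eps_pos[of n] by linarith
        qed
        then show "\<forall>\<^sub>F n in sequentially. \<forall>x\<in>{0..1}. dist (G n x) (g x) < r"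
          by (auto simp: eventually_sequentially)
      qed
    qed simp
    then have pg: "path g" by (simp add: path_def)
    have g0: "g 0 = a" unfolding g_def using Gpath by (simp add: pathstart_def)
    have g1: "g 1 = b" unfolding g_def using Gpath by (simp add: pathfinish_def)
    have inD: "g t \<in> D" if t: "t \<in> {0..1}" for t
    proof -
      have "closed D" using assms(1) by (simp add: compact_imp_closed)
      moreover have "\<forall>r>0. \<exists>y\<in>D. dist y (g t) < r"
      proof (intro allI impI)
        fix r :: real assume "r > 0"
        then obtain n where n: "8 * eps n < r" using small by blast
        obtain u where u: "u \<in> D" "dist (G n t) u < dm n"
          using polyD_near[OF G(1)[of n], of D "dm n"] Rn t by blast
        have "dist u (g t) \<le> dist (G n t) u + dist (G n t) (g t)" by (simp add: dist_triangle3)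
        then have "dist u (g t) < r" using u(2) dm_le[of n] bound[OF t, of n] n eps_pos[of n] by linarith
        then show "\<exists>y\<in>D. dist y (g t) < r" using u(1) by blast
      qed
      ultimately show ?thesis using closed_approachable by blast
    qed
    have inball: "g t \<in> ball a e" if t: "t \<in> {0..1}" for t
    proof -
      have "dist a (g t) \<le> dist a (G 0 t) + dist (G 0 t) (g t)" by (rule dist_triangle)
      moreover have "dist a (G 0 t) \<le> dist a b" using G0 dist_linepath_start[OF t] by simp
      moreover have "dist (G 0 t) (g t) \<le> 4 * eps 0" using bound[OF t] .
      ultimately have "dist a (g t) < 5 * eps 0" using ab(3) dm_le[of 0] by linarith
      moreover have "5 * eps 0 < e" using assms(3) by (simp add: eps_def c_def)
      ultimately show ?thesis by simp
    qed
    show "\<exists>g. path g \<and> path_image g \<subseteq> D \<and> path_image g \<subseteq> ball a e \<and> pathstart g = a \<and> pathfinish g = b"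
      using pg g0 g1 inD inball by (intro exI[of _ g]) (auto simp: path_image_def pathstart_def pathfinish_def)
  qed
  then show ?thesis using dm_pos by blast
qed



lemma lpc:
  fixes D :: "'b::{real_normed_vector,complete_space} set"
  assumes "compact D" "locally connected D"
  shows "locally path_connected D"
  unfolding locally_def
proof (intro allI impI)
  fix w x assume wx: "openin (top_of_set D) w \<and> x \<in> w"
  then obtain r where r: "r > 0" "\<And>x'. x' \<in> D \<Longrightarrow> dist x' x < r \<Longrightarrow> x' \<in> w"
    by (meson openin_euclidean_subtopology_iff)
  obtain d where d: "d > 0" "\<forall>a\<in>D. \<forall>b\<in>D. dist a b < d \<longrightarrow>
           (\<exists>g. path g \<and> path_image g \<subseteq> D \<and> path_image g \<subseteq> ball a r \<and> pathstart g = a \<and> pathfinish g = b)"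
    using peano_paths[OF assms r(1)] by blast
  have xD: "x \<in> D" using wx openin_imp_subset by blast
  show "\<exists>u v. openin (top_of_set D) u \<and> path_connected v \<and> x \<in> u \<and> u \<subseteq> v \<and> v \<subseteq> w"
  proof (intro exI conjI)
    show "openin (top_of_set D) (D \<inter> ball x d)" by (simp add: openin_open_Int)
    show "path_connected (path_component_set (D \<inter> ball x r) x)" by simp
    show "x \<in> D \<inter> ball x d" using xD d(1) by simp
    show "D \<inter> ball x d \<subseteq> path_component_set (D \<inter> ball x r) x"
    proof
      fix z assume z: "z \<in> D \<inter> ball x d"
      then obtain g where "path g" "path_image g \<subseteq> D" "path_image g \<subseteq> ball x r" "pathstart g = x" "pathfinish g = z"
        using d(2) xD by auto
      then show "z \<in> path_component_set (D \<inter> ball x r) x"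
        unfolding path_component_def by blast
    qed
    show "path_component_set (D \<inter> ball x r) x \<subseteq> w"
    proof
      fix z assume "z \<in> path_component_set (D \<inter> ball x r) x"
      then have "z \<in> D \<inter> ball x r" using path_component_subset by blast
      then show "z \<in> w" using r(2) by (auto simp: dist_commute)
    qed
  qed
qed

lemma pc_open:
  fixes D :: "'b::{real_normed_vector,complete_space} set"
  assumes "compact D" "locally connected D" "openin (top_of_set D) U" "connected U"
  shows "path_connected U"
proof -
  have "locally path_connected U" using locally_open_subset[OF lpc[OF assms(1,2)] assms(3)] .
  then have "path_component_set U x = U" if "x \<in> U" for x
    using path_component_eq_connected_component connected_component_eq_self assms(4) that by metis
  then show ?thesis by (simp add: path_connected_component_set)
qed

lemma sepV:
  fixes D :: "'b::{real_normed_vector,complete_space} set"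
  assumes "compact D" "connected D" "locally connected D"
    and nocirc: "\<And>S. S \<subseteq> D \<Longrightarrow> \<not> (S homeomorphic sphere (0::complex) 1)"
    and pq: "p \<in> D" "q \<in> D" "p \<noteq> q"
  shows "\<exists>x\<in>D. x \<noteq> p \<and> x \<noteq> q \<and> \<not> connected_component (D - {x}) p q"
proof -
  have "path_connected D"
    using pc_open[OF assms(1,3) _ assms(2)] by simp
  then obtain \<gamma> where \<gamma>: "arc \<gamma>" "path_image \<gamma> \<subseteq> D" "pathstart \<gamma> = p" "pathfinish \<gamma> = q"
    using pq path_connected_arcwise by metis
  define x where "x = \<gamma> (1/2)"
  have inj: "inj_on \<gamma> {0..1}" using \<gamma>(1) arc_imp_inj_on by blast
  have g0: "\<gamma> 0 = p" and g1: "\<gamma> 1 = q" using \<gamma> by (auto simp: pathstart_def pathfinish_def)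
  have xD: "x \<in> D" using \<gamma>(2) unfolding x_def path_image_def by auto
  have xp: "x \<noteq> p"
  proof
    assume "x = p"
    then have "\<gamma> (1/2) = \<gamma> 0" using g0 x_def by simp
    then have "(1/2::real) = 0" by (rule inj_onD[OF inj]) auto
    then show False by simp
  qed
  have xq: "x \<noteq> q"
  proof
    assume "x = q"
    then have "\<gamma> (1/2) = \<gamma> 1" using g1 x_def by simp
    then have "(1/2::real) = 1" by (rule inj_onD[OF inj]) auto
    then show False by simp
  qed
  have "\<not> connected_component (D - {x}) p q"
  proof
    assume cc: "connected_component (D - {x}) p q"
    define K where "K = connected_component_set (D - {x}) p"
    have pK: "p \<in> D - {x}" using pq xp by auto
    have "openin (top_of_set D) (D - {x})" by (simp add: openin_delete)
    then have Kopen: "openin (top_of_set D) K"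
      using assms(3) componentsI[OF pK] unfolding K_def
      by (meson locally_connected_open_component)
    have "path_connected K"
      using pc_open[OF assms(1,3) Kopen] by (simp add: K_def)
    moreover have "q \<in> K" "p \<in> K" using cc pK by (auto simp: K_def)
    ultimately obtain \<gamma>2 where \<gamma>2: "arc \<gamma>2" "path_image \<gamma>2 \<subseteq> K" "pathstart \<gamma>2 = p" "pathfinish \<gamma>2 = q"
      using pq path_connected_arcwise by metis
    have KD: "K \<subseteq> D - {x}" unfolding K_def by (rule connected_component_subset)
    define K2 where "K2 = path_image \<gamma>2"
    have K2c: "compact K2" unfolding K2_def using \<gamma>2(1) by (simp add: arc_imp_path compact_path_image)
    have xK2: "x \<notin> K2" using \<gamma>2(2) KD unfolding K2_def by auto
    have pK2: "p \<in> K2" "q \<in> K2" using \<gamma>2 unfolding K2_def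
      by (metis pathstart_in_path_image, metis pathfinish_in_path_image)
    have contg: "continuous_on {0..1} \<gamma>" using \<gamma>(1) arc_imp_path path_def by blast
    define T1 where "T1 = {0..1/2} \<inter> \<gamma> -` K2"
    define T2 where "T2 = {1/2..1} \<inter> \<gamma> -` K2"
    have "compact T1" unfolding T1_def
      using continuous_closed_preimage[OF continuous_on_subset[OF contg] _ compact_imp_closed[OF K2c], of "{0..1/2}"]
      by (simp add: compact_eq_bounded_closed bounded_Int)
    moreover have "0 \<in> T1" using g0 pK2 by (simp add: T1_def)
    ultimately obtain a where a: "a \<in> T1" "\<And>t. t \<in> T1 \<Longrightarrow> t \<le> a"
      using compact_attains_sup[of T1] by blast
    have "compact T2" unfolding T2_def
      using continuous_closed_preimage[OF continuous_on_subset[OF contg] _ compact_imp_closed[OF K2c], of "{1/2..1}"]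
      by (simp add: compact_eq_bounded_closed bounded_Int)
    moreover have "1 \<in> T2" using g1 pK2 by (simp add: T2_def)
    ultimately obtain b where b: "b \<in> T2" "\<And>t. t \<in> T2 \<Longrightarrow> b \<le> t"
      using compact_attains_inf[of T2] by blast
    have "\<gamma> a \<in> K2" using a(1) by (simp add: T1_def)
    then have "a \<noteq> 1/2" using xK2 x_def by metis
    then have a1: "0 \<le> a" "a < 1/2" "\<gamma> a \<in> K2"
      using a(1) unfolding T1_def by auto
    have "\<gamma> b \<in> K2" using b(1) by (simp add: T2_def)
    then have "b \<noteq> 1/2" using xK2 x_def by metis
    then have b1: "1/2 < b" "b \<le> 1" "\<gamma> b \<in> K2"
      using b(1) unfolding T2_def by auto
    obtain u where u: "u \<in> {0..1}" "\<gamma>2 u = \<gamma> a" using a1(3) unfolding K2_def path_image_def by auto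
    obtain v where v: "v \<in> {0..1}" "\<gamma>2 v = \<gamma> b" using b1(3) unfolding K2_def path_image_def by auto
    have "\<gamma> a \<noteq> \<gamma> b" using inj a1 b1 by (smt (verit, best) atLeastAtMost_iff inj_onD)
    then have uv: "u \<noteq> v" using u v by auto
    define c1 where "c1 = subpath a b \<gamma>"
    define c2 where "c2 = subpath v u \<gamma>2"
    have arc1: "arc c1" unfolding c1_def using \<gamma>(1) a1 b1 by (intro arc_subpath_arc) auto
    have arc2: "arc c2" unfolding c2_def using \<gamma>2(1) u v uv by (intro arc_subpath_arc) auto
    have e1: "pathfinish c1 = pathstart c2" "pathfinish c2 = pathstart c1"
      using u v by (auto simp: c1_def c2_def)
    have pic1: "path_image c1 = \<gamma> ` {a..b}" unfolding c1_def using a1 b1 by (simp add: path_image_subpath)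
    have pic2: "path_image c2 \<subseteq> K2" unfolding c2_def K2_def using u v by (simp add: path_image_subpath_subset)
    have inter: "path_image c1 \<inter> path_image c2 \<subseteq> {pathstart c1, pathstart c2}"
    proof
      fix y assume "y \<in> path_image c1 \<inter> path_image c2"
      then obtain t where t: "t \<in> {a..b}" "y = \<gamma> t" "y \<in> K2" using pic1 pic2 by auto
      show "y \<in> {pathstart c1, pathstart c2}"
      proof (cases "t \<le> 1/2")
        case True
        then have "t \<in> T1" using t a1 unfolding T1_def by auto
        then have "t = a" using a(2) t(1) by fastforce
        then show ?thesis using t by (simp add: c1_def)
      next
        case False
        then have "t \<in> T2" using t b1 unfolding T2_def by auto
        then have "t = b" using b(2) t(1) by fastforce
        then show ?thesis using t e1(1) by (simp add: c1_def)
      qed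
    qed
    have sp: "simple_path (c1 +++ c2)" using simple_path_join_loop[OF arc1 arc2 e1 inter] .
    have loop: "pathfinish (c1 +++ c2) = pathstart (c1 +++ c2)" using e1 by simp
    have "path_image (c1 +++ c2) homeomorphic sphere (0::complex) 1"
      using homeomorphic_simple_path_image_circle[OF sp loop, of 1 0] by simp
    moreover have "path_image (c1 +++ c2) \<subseteq> D"
    proof -
      have "path_image c1 \<subseteq> path_image \<gamma>" unfolding c1_def using a1 b1
        by (intro path_image_subpath_subset) auto
      moreover have "K2 \<subseteq> D" using \<gamma>2(2) KD unfolding K2_def by auto
      ultimately show ?thesis using pic2 e1 \<gamma>(2) by (auto simp: path_image_join)
    qed
    ultimately show False using nocirc by blast
  qed
  then show ?thesis using xD xp xq by blast
qed



lemma sep: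
  fixes D :: "'a::metric_space set"
  assumes dD: "dendrite D" and pq: "p \<in> D" "q \<in> D" "p \<noteq> q"
  shows "\<exists>x\<in>D. x \<noteq> p \<and> x \<noteq> q \<and> \<not> connected_component (D - {x}) p q"
proof -
  have cD: "compact D" "connected D" "locally connected D"
    and nc: "\<And>S. S \<subseteq> D \<Longrightarrow> \<not> simple_closed_curve S"
    using dD unfolding dendrite_def continuum_def by auto
  define f where "f x = (\<lambda>y. dist x y - dist p y)" for x
  have fb: "f x \<in> bcontfun" for x
  proof -
    have "continuous_on UNIV (f x)" unfolding f_def by (intro continuous_intros)
    moreover have "bounded (range (f x))"
    proof (rule boundedI)
      fix z assume "z \<in> range (f x)"
      then obtain y where "z = dist x y - dist p y" by (auto simp: f_def)
      then show "norm z \<le> dist x p"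
        using dist_triangle[of x y p] dist_triangle[of p y x] dist_commute[of x p] by auto
    qed
    ultimately show ?thesis by (simp add: bcontfun_def)
  qed
  define \<phi> :: "'a \<Rightarrow> ('a \<Rightarrow>\<^sub>C real)" where "\<phi> x = Bcontfun (f x)" for x
  have \<phi>app: "apply_bcontfun (\<phi> x) y = dist x y - dist p y" for x y
    unfolding \<phi>_def using fb[of x] by (simp add: Bcontfun_inverse f_def)
  have \<phi>lip: "dist (\<phi> x) (\<phi> x') \<le> dist x x'" for x x'
  proof (rule dist_bound)
    fix y
    show "dist (apply_bcontfun (\<phi> x) y) (apply_bcontfun (\<phi> x') y) \<le> dist x x'"
      unfolding \<phi>app dist_real_def
      using dist_triangle[of x y x'] dist_triangle[of x' y x] dist_commute[of x x'] by auto
  qed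
  have contf: "continuous_on D \<phi>"
    unfolding continuous_on_iff
  proof (intro ballI allI impI)
    fix x e assume "x \<in> D" "(e::real) > 0"
    then show "\<exists>d>0. \<forall>x'\<in>D. dist x' x < d \<longrightarrow> dist (\<phi> x') (\<phi> x) < e"
      using \<phi>lip le_less_trans by blast
  qed
  have injf: "inj_on \<phi> D"
  proof (rule inj_onI)
    fix x x' assume "\<phi> x = \<phi> x'"
    then have "apply_bcontfun (\<phi> x) x = apply_bcontfun (\<phi> x') x" by simp
    then show "x = x'" unfolding \<phi>app by simp
  qed
  obtain \<psi> where hom: "homeomorphism D (\<phi> ` D) \<phi> \<psi>"
    using homeomorphism_compact[OF cD(1) contf refl injf] by blast
  have c2: "compact (\<phi> ` D)" "connected (\<phi> ` D)"
    using compact_continuous_image[OF contf cD(1)] connected_continuous_image[OF contf cD(2)] by auto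
  have c3: "locally connected (\<phi> ` D)"
    using homeomorphism_locally[OF hom, of connected connected] cD(3) homeomorphic_connectedness
    unfolding homeomorphic_def by blast
  have nc2: "\<not> (S homeomorphic sphere (0::complex) 1)" if S: "S \<subseteq> \<phi> ` D" for S
  proof
    assume Sh: "S homeomorphic sphere (0::complex) 1"
    have "homeomorphism (\<psi> ` S) S \<phi> \<psi>"
    proof (rule homeomorphism_of_subsets[OF hom])
      show "\<psi> ` S \<subseteq> D" using hom S by (auto simp: homeomorphism_def)
      show "S \<subseteq> \<phi> ` D" by (rule S)
      show "\<phi> ` \<psi> ` S = S" using hom S by (force simp: homeomorphism_def image_iff)
    qed
    then have "\<psi> ` S homeomorphic S" unfolding homeomorphic_def by blast
    then have "simple_closed_curve (\<psi> ` S)"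
      using Sh homeomorphic_trans unfolding simple_closed_curve_def by blast
    moreover have "\<psi> ` S \<subseteq> D" using hom S by (auto simp: homeomorphism_def)
    ultimately show False using nc by blast
  qed
  have "\<phi> p \<noteq> \<phi> q" using injf pq by (meson inj_onD)
  then obtain x' where x': "x' \<in> \<phi> ` D" "x' \<noteq> \<phi> p" "x' \<noteq> \<phi> q"
    "\<not> connected_component (\<phi> ` D - {x'}) (\<phi> p) (\<phi> q)"
    using sepV[OF c2 c3 nc2, of "\<phi> p" "\<phi> q"] pq by blast
  then obtain x where x: "x \<in> D" "x' = \<phi> x" by blast
  have "\<not> connected_component (D - {x}) p q"
  proof
    assume "connected_component (D - {x}) p q"
    then obtain T where T: "connected T" "T \<subseteq> D - {x}" "p \<in> T" "q \<in> T"
      unfolding connected_component_def by blast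
    have "connected (\<phi> ` T)"
      using connected_continuous_image[OF continuous_on_subset[OF contf] T(1)] T(2) by blast
    moreover have "\<phi> ` T \<subseteq> \<phi> ` D - {x'}"
      using T(2) x injf by (auto dest: inj_onD)
    ultimately have "connected_component (\<phi> ` D - {x'}) (\<phi> p) (\<phi> q)"
      unfolding connected_component_def using T by blast
    then show False using x' by blast
  qed
  moreover have "x \<noteq> p" "x \<noteq> q" using x x' by auto
  ultimately show ?thesis using x by blast
qed



lemma clopen_cases:
  fixes S :: "'a::metric_space set"
  assumes "connected A" "A \<subseteq> S" "openin (top_of_set S) T" "closedin (top_of_set S) T"
  shows "A \<subseteq> T \<or> A \<inter> T = {}"
  using connectedin_clopen_cases[of "top_of_set S" A T] assms
  by (auto simp: connectedin_subtopology disjnt_def)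

lemma clopen_eq:
  assumes "connected S" "openin (top_of_set S) T" "closedin (top_of_set S) T" "T \<noteq> {}"
  shows "T = S"
  using assms connected_clopen by metis

lemma clopen_disc:
  assumes "openin (top_of_set S) T" "closedin (top_of_set S) T" "T \<noteq> {}" "T \<noteq> S"
  shows "\<not> connected S"
  using assms clopen_eq by metis

lemma comp_bd:
  fixes D B C :: "'a::metric_space set"
  assumes dD: "dendrite D" and sB: "subdendrite D B" and nB: "nondegenerate B"
    and Cc: "C \<in> components (D - B)"
  shows "\<exists>c\<in>B. c \<notin> C \<and> closure C = insert c C \<and> C \<subseteq> D - B \<and> connected C \<and>
           openin (top_of_set (D - {c})) C \<and> closedin (top_of_set (D - {c})) C \<and>
           cutpoint D c \<and> Bd D C = {c} \<and> Bd D (clD D C) = {c} \<and> clD D C = insert c C"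
proof -
  have cD: "compact D" "connected D" "locally connected D"
    using dD unfolding dendrite_def continuum_def by auto
  have BD: "B \<subseteq> D" "B \<noteq> {}" "compact B" "connected B"
    using sB unfolding subdendrite_def continuum_def by auto
  have clD: "closed D" using cD(1) compact_imp_closed by blast
  have clB: "closed B" using BD(3) compact_imp_closed by blast
  have CDB: "C \<subseteq> D - B" using Cc in_components_subset by blast
  have Ccon: "connected C" using Cc in_components_connected by blast
  have Cne: "C \<noteq> {}" using Cc in_components_nonempty by blast
  have opDB: "openin (top_of_set D) (D - B)"
    using closed_subset[OF BD(1) clB] by (simp add: openin_diff)
  have Copen: "openin (top_of_set D) C"
    using cD(3) opDB Cc locally_connected_open_component by blast
  have clC: "closure C \<subseteq> D" using CDB clD closure_minimal by blast
  have frB: "closure C - C \<subseteq> B"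
  proof
    fix y assume y: "y \<in> closure C - C"
    show "y \<in> B"
    proof (rule ccontr)
      assume "y \<notin> B"
      then have yDB: "y \<in> D - B" using y clC by auto
      define K where "K = connected_component_set (D - B) y"
      have Kc: "K \<in> components (D - B)" unfolding K_def using yDB by (rule componentsI)
      then have "openin (top_of_set D) K"
        using cD(3) opDB locally_connected_open_component by blast
      then obtain W where W: "open W" "K = D \<inter> W" by (meson openin_open)
      have "y \<in> K" unfolding K_def using yDB by simp
      then have "W \<inter> closure C \<noteq> {}" using W y by auto
      then have "W \<inter> C \<noteq> {}" using W(1) open_Int_closure_eq_empty by blast
      then have "K \<inter> C \<noteq> {}" using W CDB by auto
      then have "K = C" using components_nonoverlap[OF Kc Cc] by blast
      then show False using \<open>y \<in> K\<close> y by blast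
    qed
  qed
  have frne: "closure C - C \<noteq> {}"
  proof
    assume "closure C - C = {}"
    then have "closed C" using closure_subset[of C] closure_closed[of C] by (metis Diff_eq_empty_iff closed_closure subset_antisym)
    then have "closedin (top_of_set D) C" using closed_subset CDB by blast
    then have "C = D" using clopen_eq[OF cD(2) Copen _ Cne] by blast
    then show False using BD CDB by blast
  qed
  have single: "p = q" if "p \<in> closure C - C" "q \<in> closure C - C" for p q
  proof (rule ccontr)
    assume "p \<noteq> q"
    moreover have "p \<in> D" "q \<in> D" using that clC by auto
    ultimately obtain x where x: "x \<in> D" "x \<noteq> p" "x \<noteq> q" "\<not> connected_component (D - {x}) p q"
      using sep[OF dD] by blast
    have pqB: "p \<in> B" "q \<in> B" using that frB by auto
    show False
    proof (cases "x \<in> C")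
      case True
      then have "B \<subseteq> D - {x}" using BD CDB by auto
      then show False using x(4) BD(4) pqB unfolding connected_component_def by blast
    next
      case False
      have "connected (C \<union> {p, q})"
        by (rule connected_intermediate_closure[OF Ccon]) (use that closure_subset in auto)
      moreover have "C \<union> {p, q} \<subseteq> D - {x}" using False x CDB \<open>p \<in> D\<close> \<open>q \<in> D\<close> by auto
      ultimately show False using x(4) unfolding connected_component_def by blast
    qed
  qed
  obtain c where c: "c \<in> closure C - C" using frne by blast
  have frc: "closure C - C = {c}" using c single by blast
  have cB: "c \<in> B" using c frB by blast
  have cC: "c \<notin> C" using c by blast
  have clCeq: "closure C = insert c C" using frc closure_subset[of C] by blast
  have cD': "c \<in> D" using c clC by blast
  have insD: "insert c C \<subseteq> D" using clCeq clC by simp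
  have closed_ins: "closed (insert c C)" using clCeq by (metis closed_closure)
  have clDC: "clD D C = insert c C"
  proof -
    have "clD D C = D \<inter> closure (D \<inter> C)" unfolding clD_def by (simp add: closure_of_subtopology)
    also have "\<dots> = insert c C" using CDB clCeq insD by (simp add: Int_absorb1 Int_absorb2)
    finally show ?thesis .
  qed
  have BdC: "Bd D C = {c}"
    unfolding Bd_def frontier_of_def using clDC[unfolded clD_def] interior_of_openin[OF Copen] cC
    by auto
  have int_ins: "(top_of_set D) interior_of (insert c C) = C"
  proof
    show "C \<subseteq> (top_of_set D) interior_of (insert c C)"
      using interior_of_maximal[OF _ Copen] by blast
    show "(top_of_set D) interior_of (insert c C) \<subseteq> C"
    proof
      fix y assume y: "y \<in> (top_of_set D) interior_of (insert c C)"
      have sub: "(top_of_set D) interior_of (insert c C) \<subseteq> insert c C" by (rule interior_of_subset)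
      show "y \<in> C"
      proof (rule ccontr)
        assume "y \<notin> C"
        then have "y = c" using y sub by blast
        have "C \<subseteq> (top_of_set D) interior_of (insert c C)"
          using interior_of_maximal[OF _ Copen, of "insert c C"] by blast
        then have "(top_of_set D) interior_of (insert c C) = insert c C"
          using y sub \<open>y = c\<close> by blast
        then have op: "openin (top_of_set D) (insert c C)"
          by (metis openin_interior_of)
        have "closedin (top_of_set D) (insert c C)"
          using closed_subset[OF _ closed_ins] clC clCeq by simp
        then have "insert c C = D" using clopen_eq[OF cD(2) op] by blast
        then have "B \<subseteq> {c}" using BD(1) CDB by blast
        then show False using nB unfolding nondegenerate_def by blast
      qed
    qed
  qed
  have BdcC: "Bd D (clD D C) = {c}"
  proof -
    have "(top_of_set D) closure_of (insert c C) = D \<inter> closure (D \<inter> insert c C)"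
      by (simp add: closure_of_subtopology)
    also have "\<dots> = insert c C" using insD closed_ins by (simp add: Int_absorb1 Int_absorb2)
    finally have "(top_of_set D) closure_of (insert c C) = insert c C" .
    then show ?thesis unfolding Bd_def frontier_of_def clDC int_ins using cC by auto
  qed
  have opC2: "openin (top_of_set (D - {c})) C"
  proof (rule openin_subset_trans[OF Copen])
    show "C \<subseteq> D - {c}" using CDB cC by blast
  qed auto
  have clC2: "closedin (top_of_set (D - {c})) C"
  proof -
    have "(D - {c}) \<inter> insert c C = C" using CDB cC by blast
    then show ?thesis using closedin_closed_Int[OF closed_ins, of "D - {c}"] by simp
  qed
  have cut: "cutpoint D c"
    unfolding cutpoint_def
  proof (intro conjI cD')
    obtain b where b: "b \<in> B" "b \<noteq> c" using nB unfolding nondegenerate_def by blast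
    then have "b \<in> D - {c}" "b \<notin> C" using BD CDB by auto
    then have "C \<noteq> D - {c}" by blast
    then show "\<not> connected (D - {c})" using clopen_disc[OF opC2 clC2 Cne] by blast
  qed
  show ?thesis
    by (rule bexI[OF _ cB], intro conjI cC clCeq CDB Ccon opC2 clC2 cut BdC BdcC clDC)
qed

theorem lemma10:
  fixes D A1 A2 B1 B2 C1 C2 :: "'a::metric_space set"
  assumes "dendrite D"
    and "subdendrite D A1" "subdendrite D A2" "subdendrite D B1" "subdendrite D B2"
    and "nondegenerate A1" "nondegenerate A2" "nondegenerate B1" "nondegenerate B2"
    and "A1 \<inter> B1 = {}" "A2 \<inter> B2 = {}"
    and "A1 \<inter> A2 \<noteq> {}" "B1 \<inter> B2 \<noteq> {}" "A1 \<inter> B2 \<noteq> {}"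
    and "C1 \<in> components (D - B1)" "A1 \<subseteq> C1"
    and "C2 \<in> components (D - B2)" "A2 \<subseteq> C2"
  shows "\<exists>c1 c2.
           c1 \<in> B1 \<and> cutpoint D c1 \<and> Bd D C1 = {c1} \<and> Bd D (clD D C1) = {c1} \<and>
           c2 \<in> B2 \<and> cutpoint D c2 \<and> Bd D C2 = {c2} \<and> Bd D (clD D C2) = {c2} \<and>
           c2 \<in> A1 \<inter> B2 \<and> c1 \<notin> clD D C2 \<and> C2 \<subset> C1"
proof -
  note a = assms
  obtain c1 where c1: "c1 \<in> B1" "c1 \<notin> C1" "closure C1 = insert c1 C1" "C1 \<subseteq> D - B1" "connected C1"
    "openin (top_of_set (D - {c1})) C1" "closedin (top_of_set (D - {c1})) C1"
    "cutpoint D c1" "Bd D C1 = {c1}" "Bd D (clD D C1) = {c1}" "clD D C1 = insert c1 C1"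
    using comp_bd[OF a(1) a(4) a(8) a(15)] by blast
  obtain c2 where c2: "c2 \<in> B2" "c2 \<notin> C2" "closure C2 = insert c2 C2" "C2 \<subseteq> D - B2" "connected C2"
    "openin (top_of_set (D - {c2})) C2" "closedin (top_of_set (D - {c2})) C2"
    "cutpoint D c2" "Bd D C2 = {c2}" "Bd D (clD D C2) = {c2}" "clD D C2 = insert c2 C2"
    using comp_bd[OF a(1) a(5) a(9) a(17)] by blast
  have A1: "A1 \<subseteq> D" "connected A1" using a(2) unfolding subdendrite_def continuum_def by auto
  have B1: "B1 \<subseteq> D" "connected B1" using a(4) unfolding subdendrite_def continuum_def by auto
  have c2D: "c2 \<in> D" using c2(1) a(5) unfolding subdendrite_def by auto
  have c2A1: "c2 \<in> A1"
  proof (rule ccontr)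
    assume "c2 \<notin> A1"
    then have "A1 \<subseteq> D - {c2}" using A1 by blast
    then have "A1 \<subseteq> C2 \<or> A1 \<inter> C2 = {}" using clopen_cases[OF A1(2) _ c2(6) c2(7)] by blast
    moreover have "A1 \<inter> C2 \<noteq> {}" using a(12) a(18) by blast
    ultimately have "A1 \<subseteq> C2" by blast
    then show False using a(14) c2(4) by blast
  qed
  have c12: "c1 \<noteq> c2" using c1(1) c2A1 a(10) by blast
  have B1C2: "B1 \<inter> C2 = {}"
  proof -
    have "c2 \<notin> B1" using c2A1 a(10) by blast
    then have "B1 \<subseteq> D - {c2}" using B1 by blast
    then have "B1 \<subseteq> C2 \<or> B1 \<inter> C2 = {}" using clopen_cases[OF B1(2) _ c2(6) c2(7)] by blast
    moreover have "\<not> B1 \<subseteq> C2" using a(13) c2(4) by blast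
    ultimately show ?thesis by blast
  qed
  have nc1: "c1 \<notin> clD D C2" using c2(11) c12 B1C2 c1(1) by blast
  have "insert c2 C2 \<subseteq> C1"
  proof (rule components_maximal[OF a(15)])
    show "connected (insert c2 C2)" using connected_imp_connected_closure[OF c2(5)] c2(3) by simp
    show "insert c2 C2 \<subseteq> D - B1" using c2D c2(4) B1C2 c2A1 a(10) by blast
    show "C1 \<inter> insert c2 C2 \<noteq> {}" using a(12) a(16) a(18) by blast
  qed
  then have "C2 \<subset> C1" using c2(2) by blast
  then show ?thesis using c1 c2 c2A1 nc1 by blast
qed


end
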